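(* Let the setting described in the context hold, and assume conditions (A)(i)–(iii) and (P), with $L_F^2\eta_k<1-\eta_F$ for all $k\ge1$. Assume $\lim_{\delta\to0^+}\lambda_k^\delta=\lambda_k^0$ for each $k$. Assume the stopping index $k(\delta)$ satisfies $\lim_{\delta\to0^+}k(\delta)=\infty$ and $\lim_{\delta\to0^+}\delta^2\sum_{i=1}^{k(\delta)}\eta_i=0$. Take the radius \[ \rho^2=e^{n\sum_{j=1}^{k(\delta)}c_j^\delta}\Big(\|x_1-x^\dagger\|^2+(C_{max}+\delta)^2+n\delta^2\sum_{j=1}^{k(\delta)}d_j\Big)-(C_{max}+\delta)^2, \] where \[ c_j^\delta=2\eta_j\lambda_j^\delta\max(1,L_G^2)\big(\tfrac32+2\eta_j\lambda_j^\delta L_G^2\big),\qquad d_j=\frac{(1+\eta_F)^2}{2(1-L_F^2\eta_j-\eta_F)}\eta_j . \] Then for every $k\le k(\delta)$, the data-driven SGD iterate $x_k^\delta$ lies in $\mathcal{B}_\rho(x^\dagger)$.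
   Context: Setting. $X,Y$ are real Hilbert spaces and $n\ge1$. $Y^n$ is the product Hilbert space. $F_i:\mathcal{D}(F_i)\subset X\to Y$ and $G_i:X\to Y$ for $i=1,\dots,n$, with $F(x)=n^{-1/2}(F_i(x))_i$ and $G(x)=n^{-1/2}(G_i(x))_i$. Data. The exact data are $y^\dagger=n^{-1/2}(y_i^\dagger)_i$ and the noisy data $y^\delta=n^{-1/2}(y_i^\delta)_i$, with $\|y^\delta-y^\dagger\|\le\delta$. Reference solution. $x_1$ is a deterministic initial guess, and $x^\dagger$ is the solution of $F(x)=y^\dagger$ of minimal distance to $x_1$. Algorithm. $x_1^\delta=x_1$, and \[ x_{k+1}^\delta=x_k^\delta-\eta_k\big(F_{i_k}'(x_k^\delta)^*(F_{i_k}(x_k^\delta)-y^\delta_{i_k})+\lambda_k^\delta G_{i_k}'(x_k^\delta)^*(G_{i_k}(x_k^\delta)-y^\delta_{i_k})\big), \] with $i_k$ drawn uniformly and independently from $\{1,\dots,n\}$, $\eta_k>0$ and $\lambda_k^\delta>0$. (A) On the closed ball $\mathcal{B}_\rho(x^\dagger)\subset\bigcap_i\mathcal{D}(F_i)$ the following hold. (i) $F_i$ and $G_i$ have continuous Fréchet derivatives bounded by $L_F$ and $L_G$. (ii) There is $\eta_F\in[0,1)$ with $\|F_i(x)-F_i(\tilde x)-F_i'(\tilde x)(x-\tilde x)\|\le\eta_F\|F_i(x)-F_i(\tilde x)\|$. (iii) $C_{min}\le\|G(x^* )-y^\dagger\|\le C_{max}$ for every solution $x^*\in\mathcal{B}_\rho(x^\dagger)$,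 with $0<C_{min}\le C_{max}$. (P) $L_F^2\eta_k<1$, $\sum_k\eta_k=\infty$, and $\sum_k\eta_k\lambda_k^\delta<\infty$. *)

theory Defs
  imports "HOL-Analysis.Analysis"
begin

text \<open>Norm in the product Hilbert space Y^n of the scaled vector n^(-1/2) (v_i)_{i=1..n}.\<close>
definition stack_norm :: "nat \<Rightarrow> (nat \<Rightarrow> 'b::real_normed_vector) \<Rightarrow> real" where
  "stack_norm n v = sqrt ((1 / real n) * (\<Sum>i\<in>{1..n}. (norm (v i))^2))"

text \<open>x solves F(x) = y-dagger (componentwise; the common scaling n^(-1/2) cancels),
  with x in the common domain.\<close>
definition is_solution :: "nat \<Rightarrow> (nat \<Rightarrow> 'a set) \<Rightarrow> (nat \<Rightarrow> 'a \<Rightarrow> 'b) \<Rightarrow> (nat \<Rightarrow> 'b) \<Rightarrow> 'a \<Rightarrow> bool" where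
  "is_solution n D F ydag x \<longleftrightarrow> (\<forall>i\<in>{1..n}. x \<in> D i \<and> F i x = ydag i)"

definition is_min_dist_solution ::
  "nat \<Rightarrow> (nat \<Rightarrow> 'a::real_normed_vector set) \<Rightarrow> (nat \<Rightarrow> 'a \<Rightarrow> 'b) \<Rightarrow> (nat \<Rightarrow> 'b) \<Rightarrow> 'a \<Rightarrow> 'a \<Rightarrow> bool" where
  "is_min_dist_solution n D F ydag x1 xd \<longleftrightarrow>
     is_solution n D F ydag xd \<and> (\<forall>x. is_solution n D F ydag x \<longrightarrow> norm (xd - x1) \<le> norm (x - x1))"

text \<open>Data-driven SGD iterates along a fixed index sequence idx (idx k = i_k).
  sgd ... k is the iterate x_k for k \<ge> 1 (the value at 0 is set to x_1 as a dummy).\<close>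
fun sgd :: "(nat \<Rightarrow> 'a::real_inner \<Rightarrow> 'b::real_inner) \<Rightarrow> (nat \<Rightarrow> 'a \<Rightarrow> 'a \<Rightarrow>\<^sub>L 'b) \<Rightarrow>
            (nat \<Rightarrow> 'a \<Rightarrow> 'b) \<Rightarrow> (nat \<Rightarrow> 'a \<Rightarrow> 'a \<Rightarrow>\<^sub>L 'b) \<Rightarrow>
            (nat \<Rightarrow> 'b) \<Rightarrow> (nat \<Rightarrow> real) \<Rightarrow> (nat \<Rightarrow> real) \<Rightarrow> (nat \<Rightarrow> nat) \<Rightarrow> 'a \<Rightarrow> nat \<Rightarrow> 'a" where
  "sgd F F' G G' yd eta lam idx x1 0 = x1"
| "sgd F F' G G' yd eta lam idx x1 (Suc k) =
     (if k = 0 then x1 else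
      (let x = sgd F F' G G' yd eta lam idx x1 k; i = idx k in
        x - eta k *\<^sub>R (adjoint (blinfun_apply (F' i x)) (F i x - yd i)
                       + lam k *\<^sub>R adjoint (blinfun_apply (G' i x)) (G i x - yd i))))"

end

theory Submission
  imports Defs
begin

lemma quad_zero:
  fixes a b :: real
  assumes "b \<ge> 0" "\<forall>t. 0 \<le> t * a + t^2 * b"
  shows "a = 0"
proof -
  have "0 \<le> (-a/(b+1)) * a + (-a/(b+1))^2 * b" using assms(2) by blast
  also have "\<dots> = (-(a^2)) / ((b+1)^2)" using assms(1)
    by (simp add: power2_eq_square divide_simps) (simp add: algebra_simps)
  finally have "a^2 / (b+1)^2 \<le> 0" by simp
  moreover have "(b+1)^2 > 0" using assms(1) by simp
  ultimately have "a^2 \<le> 0" by (simp add: divide_le_0_iff)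
  thus ?thesis by simp
qed

lemma riesz:
  fixes \<phi> :: "'a::{real_inner,complete_space} \<Rightarrow> real"
  assumes bl: "bounded_linear \<phi>"
  shows "\<exists>z. \<forall>x. \<phi> x = z \<bullet> x"
proof -
  interpret bounded_linear \<phi> by (rule bl)
  obtain K where K: "\<And>x. norm (\<phi> x) \<le> norm x * K" "K > 0" using pos_bounded by blast
  define J where "J x = (norm x)^2/2 - \<phi> x" for x
  have lb: "J x \<ge> -(K^2)/2" for x
  proof -
    have "\<phi> x \<le> norm x * K" using K(1)[of x] by simp
    moreover have "0 \<le> (norm x - K)^2" by simp
    ultimately show ?thesis unfolding J_def by (simp add: power2_eq_square algebra_simps)
  qed
  have bdd: "bdd_below (range J)" using lb by (intro bdd_belowI2) 
  define m where "m = Inf (range J)"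
  have m_le: "m \<le> J x" for x unfolding m_def by (rule cInf_lower[OF _ bdd]) simp
  have "\<exists>x. J x < m + 1/Suc k" for k
  proof -
    have "Inf (range J) < m + 1/Suc k" unfolding m_def by simp
    then show ?thesis using cInf_less_iff[OF _ bdd] by auto
  qed
  then obtain xs where xs: "\<And>k. J (xs k) < m + 1/Suc k" by metis
  have par: "(norm (x - y))^2 = 4 * (J x + J y - 2 * J ((1/2) *\<^sub>R (x + y)))" for x y
    unfolding J_def power2_norm_eq_inner
    by (simp add: inner_simps scaleR add diff algebra_simps inner_commute)
  have cd: "(norm (xs k - xs l))^2 \<le> 4 * (1/Suc k + 1/Suc l)" for k l
    using par[of "xs k" "xs l"] xs[of k] xs[of l] m_le[of "(1/2) *\<^sub>R (xs k + xs l)"] by argo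
  have "Cauchy xs"
  proof (rule metric_CauchyI)
    fix e :: real assume e: "0 < e"
    obtain N :: nat where N: "8 / e^2 < N" using reals_Archimedean2 by blast
    have "dist (xs k) (xs l) < e" if "k \<ge> N" "l \<ge> N" for k l
    proof -
      have "1/real (Suc k) \<le> 1/Suc N" "1/real (Suc l) \<le> 1/Suc N" using that by (simp_all add: frac_le)
      hence "(norm (xs k - xs l))^2 \<le> 8 / Suc N" using cd[of k l] by simp
      also have "\<dots> < e^2" using N e by (simp add: field_simps) (smt (verit) zero_less_power)
      finally have "(norm (xs k - xs l))^2 < e^2" .
      thus ?thesis using e by (simp add: dist_norm power_less_imp_less_base)
    qed
    thus "\<exists>M. \<forall>m\<ge>M. \<forall>n\<ge>M. dist (xs m) (xs n) < e" by blast
  qed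
  then obtain z where z: "xs \<longlonglongrightarrow> z" using Cauchy_convergent_iff convergent_def by blast
  have Jc: "(\<lambda>k. J (xs k)) \<longlonglongrightarrow> J z" unfolding J_def
    by (intro tendsto_intros z tendsto) auto
  have zmin: "J z \<le> J y" for y
  proof (rule tendsto_le[OF _ _ Jc])
    show "(\<lambda>k. J y + 1/Suc k) \<longlonglongrightarrow> J y"
      using tendsto_add[OF tendsto_const LIMSEQ_inverse_real_of_nat] by (simp add: inverse_eq_divide)
    show "\<forall>\<^sub>F k in sequentially. J (xs k) \<le> J y + 1/Suc k"
      using xs m_le[of y] by (intro always_eventually allI) (meson add_le_cancel_right less_le_not_le order_trans  less_eq_real_def)
  qed simp
  have "\<phi> h = z \<bullet> h" for h
  proof -
    have "\<forall>t. 0 \<le> t * (z \<bullet> h - \<phi> h) + t^2 * ((norm h)^2/2)"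
    proof
      fix t
      have "J (z + t *\<^sub>R h) - J z = t * (z \<bullet> h - \<phi> h) + t^2 * ((norm h)^2/2)"
        unfolding J_def power2_norm_eq_inner
        by (simp add: inner_simps add scaleR algebra_simps inner_commute power2_eq_square)
      thus "0 \<le> t * (z \<bullet> h - \<phi> h) + t^2 * ((norm h)^2/2)" using zmin[of "z + t *\<^sub>R h"] by simp
    qed
    from quad_zero[OF _ this] show ?thesis by simp
  qed
  thus ?thesis by blast
qed

lemma adjoint_ok:
  fixes f :: "'a::{real_inner,complete_space} \<Rightarrow> 'b::real_inner"
  assumes "bounded_linear f"
  shows "\<And>x y. f x \<bullet> y = x \<bullet> adjoint f y"
proof -
  have "\<forall>y. \<exists>z. \<forall>x. f x \<bullet> y = z \<bullet> x"
  proof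
    fix y
    have "bounded_linear (\<lambda>x. f x \<bullet> y)"
      using bounded_linear_compose[OF bounded_linear_inner_left assms] by simp
    from riesz[OF this] show "\<exists>z. \<forall>x. f x \<bullet> y = z \<bullet> x" .
  qed
  then obtain g where g: "\<And>x y. f x \<bullet> y = g y \<bullet> x" by metis
  have "\<exists>f'. \<forall>x y. f x \<bullet> y = x \<bullet> f' y" using g by (metis inner_commute)
  hence "\<forall>x y. f x \<bullet> y = x \<bullet> adjoint f y" unfolding adjoint_def by (rule someI_ex)
  thus "\<And>x y. f x \<bullet> y = x \<bullet> adjoint f y" by blast
qed

lemma adjoint_norm:
  fixes A :: "'a::{real_inner,complete_space} \<Rightarrow>\<^sub>L 'b::real_inner"
  shows "norm (adjoint (blinfun_apply A) y) \<le> norm A * norm y"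
proof -
  let ?g = "adjoint (blinfun_apply A) y"
  have "(norm ?g)^2 = A ?g \<bullet> y" using adjoint_ok[OF blinfun.bounded_linear_right, of A ?g y]
    by (simp add: power2_norm_eq_inner)
  also have "\<dots> \<le> norm (A ?g) * norm y" by (rule norm_cauchy_schwarz)
  also have "\<dots> \<le> norm A * norm ?g * norm y" by (simp add: mult_right_mono norm_blinfun)
  finally have "norm ?g * norm ?g \<le> (norm A * norm y) * norm ?g" by (simp add: power2_eq_square algebra_simps)
  thus ?thesis by (cases "norm ?g = 0") auto
qed

lemma fpart:
  fixes \<eta> A e etaF LF \<gamma> :: real
  assumes "\<eta> > 0" "\<gamma> > 0" "1 - LF^2 * \<eta> - etaF = \<gamma>"
  shows "-2*\<eta>*((1-etaF)*A^2 - (1+etaF)*A*e) + \<eta>^2*(2*LF^2*A^2) \<le> (1+etaF)^2/(2*\<gamma>)*\<eta> * e^2"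
proof -
  define q where "q = (1+etaF)*e/(2*\<gamma>)"
  have q1: "2*\<gamma>*q = (1+etaF)*e" using assms unfolding q_def by simp
  have q2: "2*\<eta>*\<gamma>*q^2 = (1+etaF)^2/(2*\<gamma>)*\<eta> * e^2"
    using assms unfolding q_def by (simp add: power2_eq_square)
  have ex: "2*\<eta>*\<gamma>*(A - q)^2 = 2*\<eta>*\<gamma>*A^2 - 2*\<eta>*A*(2*\<gamma>*q) + 2*\<eta>*\<gamma>*q^2"
    by (simp add: power2_eq_square algebra_simps)
  have lhs: "-2*\<eta>*((1-etaF)*A^2 - (1+etaF)*A*e) + \<eta>^2*(2*LF^2*A^2)
     = -2*\<eta>*(1 - LF^2 * \<eta> - etaF)*A^2 + 2*\<eta>*A*((1+etaF)*e)"
    by (simp add: power2_eq_square algebra_simps)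
  have "0 \<le> 2*\<eta>*\<gamma>*(A - q)^2" using assms by simp
  thus ?thesis using ex lhs q1 q2 assms(3) by simp
qed

lemma gpart:
  fixes \<eta> l B E W LG :: real
  assumes "\<eta> \<ge> 0" "l \<ge> 0" "LG \<ge> 0" "0 \<le> B" "B \<le> LG*E + W" "E \<ge> 0" "W \<ge> 0"
  shows "2*\<eta>*l*(B*LG*E) + \<eta>^2*(2*l^2*LG^2*B^2)
     \<le> 2*\<eta>*l*max 1 (LG^2)*(3/2 + 2*\<eta>*l*LG^2) * (E^2 + W^2)"
proof -
  let ?M = "max 1 (LG^2)"
  have h1: "B*LG*E \<le> (LG*E+W)*LG*E" using assms by (simp add: mult_right_mono)
  have sq: "0 \<le> (LG*E - W)^2" by simp
  have sqe: "(LG*E - W)^2 = LG^2*E^2 - 2*(LG*E*W) + W^2" by (simp add: power2_eq_square algebra_simps)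
  have pe: "(LG*E+W)*LG*E = LG^2*E^2 + LG*E*W" by (simp add: power2_eq_square algebra_simps)
  have h2: "(LG*E+W)*LG*E \<le> 3/2 * (LG^2*E^2) + W^2/2"
    using sq sqe pe by linarith
  have h3: "3/2 * (LG^2*E^2) + W^2/2 \<le> 3/2 * ?M * (E^2+W^2)"
  proof -
    have "LG^2*E^2 \<le> ?M*E^2" by (simp add: mult_right_mono)
    moreover have "W^2 \<le> ?M * W^2" using mult_right_mono[of 1 ?M "W^2"] by simp
    moreover have "0 \<le> W^2" by simp
    moreover have "?M*(E^2+W^2) = ?M*E^2 + ?M*W^2" by (simp add: algebra_simps)
    ultimately show ?thesis by linarith
  qed
  have g1: "B*LG*E \<le> 3/2 * ?M * (E^2+W^2)" using h1 h2 h3 by linarith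
  have h4: "B^2 \<le> (LG*E+W)^2" using assms by (simp add: power_mono)
  have pe2: "(LG*E+W)^2 = LG^2*E^2 + 2*(LG*E*W) + W^2" by (simp add: power2_eq_square algebra_simps)
  have h5: "(LG*E+W)^2 \<le> 2*(LG^2*E^2 + W^2)"
    using sq sqe pe2 by (smt (verit))
  have h6: "LG^2*E^2 + W^2 \<le> ?M * (E^2+W^2)"
  proof -
    have "LG^2*E^2 \<le> ?M*E^2" by (simp add: mult_right_mono)
    moreover have "W^2 \<le> ?M * W^2" using mult_right_mono[of 1 ?M "W^2"] by simp
    ultimately show ?thesis by (simp add: algebra_simps)
  qed
  have g2: "LG^2*B^2 \<le> LG^2 * (2 * ?M * (E^2+W^2))"
    using h4 h5 h6 by (intro mult_left_mono) auto
  have "2*\<eta>*l*(B*LG*E) \<le> 2*\<eta>*l*(3/2 * ?M * (E^2+W^2))"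
    using g1 assms by (intro mult_left_mono) auto
  moreover have "\<eta>^2*(2*l^2*LG^2*B^2) \<le> \<eta>^2*(2*l^2*(LG^2 * (2 * ?M * (E^2+W^2))))"
  proof -
    have "(2*\<eta>^2*l^2) * (LG^2*B^2) \<le> (2*\<eta>^2*l^2) * (LG^2 * (2 * ?M * (E^2+W^2)))"
      by (rule mult_left_mono[OF g2]) simp
    thus ?thesis by (simp add: algebra_simps)
  qed
  ultimately show ?thesis by (simp add: power2_eq_square algebra_simps)
qed

lemma stack_comp:
  assumes "stack_norm n v \<le> C" "1 \<le> n" "i \<in> {1..n}"
  shows "(norm (v i))^2 \<le> real n * C^2"
proof -
  have "0 \<le> stack_norm n v" unfolding stack_norm_def by (simp add: sum_nonneg)
  hence C: "C \<ge> 0" using assms(1) by linarith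
  have "(1 / real n) * (\<Sum>i\<in>{1..n}. (norm (v i))^2) \<le> C^2"
    using assms(1) C unfolding stack_norm_def by (metis real_le_lsqrt real_sqrt_ge_zero sqrt_le_D)
  moreover have "real n > 0" using assms(2) by simp
  ultimately have "(\<Sum>i\<in>{1..n}. (norm (v i))^2) \<le> real n * C^2"
    by (simp add: divide_le_eq mult.commute)
  moreover have "(norm (v i))^2 \<le> (\<Sum>i\<in>{1..n}. (norm (v i))^2)"
    by (rule member_le_sum) (use assms in auto)
  ultimately show ?thesis by linarith
qed

theorem corollary3p2:
  fixes n :: nat
    and D :: "nat \<Rightarrow> 'a::{real_inner,complete_space} set"
    and F :: "nat \<Rightarrow> 'a \<Rightarrow> 'b::{real_inner,complete_space}"
    and F' :: "nat \<Rightarrow> 'a \<Rightarrow> 'a \<Rightarrow>\<^sub>L 'b"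
    and G :: "nat \<Rightarrow> 'a \<Rightarrow> 'b"
    and G' :: "nat \<Rightarrow> 'a \<Rightarrow> 'a \<Rightarrow>\<^sub>L 'b"
    and ydag yd :: "nat \<Rightarrow> 'b"
    and x1 xdag :: 'a
    and eta :: "nat \<Rightarrow> real"
    and lam :: "real \<Rightarrow> nat \<Rightarrow> real"
    and kstop :: "real \<Rightarrow> nat"
    and idx :: "nat \<Rightarrow> nat"
    and \<delta> rho LF LG etaF Cmin Cmax :: real
  assumes n_pos: "1 \<le> n"
    and delta_pos: "0 < \<delta>"
    and noise: "stack_norm n (\<lambda>i. yd i - ydag i) \<le> \<delta>"
    and xdag: "is_min_dist_solution n D F ydag x1 xdag"
    and idx_range: "\<forall>k\<ge>1. idx k \<in> {1..n}"
    and eta_pos: "\<forall>k\<ge>1. 0 < eta k"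
    and lam_pos: "\<forall>k\<ge>1. 0 < lam \<delta> k"
    and rho_def: "rho = sqrt (exp (real n * (\<Sum>j=1..kstop \<delta>.
                      2 * eta j * lam \<delta> j * max 1 (LG^2) * (3/2 + 2 * eta j * lam \<delta> j * LG^2)))
                    * ((norm (x1 - xdag))^2 + (Cmax + \<delta>)^2
                       + real n * \<delta>^2 * (\<Sum>j=1..kstop \<delta>.
                           (1 + etaF)^2 / (2 * (1 - LF^2 * eta j - etaF)) * eta j))
                    - (Cmax + \<delta>)^2)"
    and dom: "\<forall>i\<in>{1..n}. cball xdag rho \<subseteq> D i"
    and A1F: "\<forall>i\<in>{1..n}. \<forall>x\<in>cball xdag rho. (F i has_derivative blinfun_apply (F' i x)) (at x within D i)"
    and A1Fc: "\<forall>i\<in>{1..n}. continuous_on (cball xdag rho) (F' i)"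
    and A1Fb: "\<forall>i\<in>{1..n}. \<forall>x\<in>cball xdag rho. norm (F' i x) \<le> LF"
    and A1G: "\<forall>i\<in>{1..n}. \<forall>x\<in>cball xdag rho. (G i has_derivative blinfun_apply (G' i x)) (at x)"
    and A1Gc: "\<forall>i\<in>{1..n}. continuous_on (cball xdag rho) (G' i)"
    and A1Gb: "\<forall>i\<in>{1..n}. \<forall>x\<in>cball xdag rho. norm (G' i x) \<le> LG"
    and etaF: "0 \<le> etaF" "etaF < 1"
    and A2: "\<forall>i\<in>{1..n}. \<forall>x\<in>cball xdag rho. \<forall>x'\<in>cball xdag rho.
               norm (F i x - F i x' - F' i x' (x - x')) \<le> etaF * norm (F i x - F i x')"
    and Cpos: "0 < Cmin" "Cmin \<le> Cmax"
    and A3: "\<forall>xs\<in>cball xdag rho. is_solution n D F ydag xs \<longrightarrow>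
               Cmin \<le> stack_norm n (\<lambda>i. G i xs - ydag i) \<and> stack_norm n (\<lambda>i. G i xs - ydag i) \<le> Cmax"
    and P1: "\<forall>k\<ge>1. LF^2 * eta k < 1"
    and P2: "\<not> summable eta"
    and P3: "summable (\<lambda>k. eta k * lam \<delta> k)"
    and step: "\<forall>k\<ge>1. LF^2 * eta k < 1 - etaF"
    and lam_lim: "\<forall>k\<ge>1. ((\<lambda>d. lam d k) \<longlongrightarrow> lam 0 k) (at_right 0)"
    and kstop_lim: "filterlim kstop at_top (at_right 0)"
    and kstop_lim2: "((\<lambda>d. d^2 * (\<Sum>i=1..kstop d. eta i)) \<longlongrightarrow> 0) (at_right 0)"
  shows "\<forall>k. 1 \<le> k \<and> k \<le> kstop \<delta> \<longrightarrow>
           sgd F F' G G' yd eta (lam \<delta>) idx x1 k \<in> cball xdag rho"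
proof -
  define c where "c j = 2 * eta j * lam \<delta> j * max 1 (LG^2) * (3/2 + 2 * eta j * lam \<delta> j * LG^2)" for j
  define d where "d j = (1 + etaF)^2 / (2 * (1 - LF^2 * eta j - etaF)) * eta j" for j
  define K where "K = (Cmax + \<delta>)^2"
  define s where "s x = (norm (x - xdag))^2 + K" for x
  define X where "X = sgd F F' G G' yd eta (lam \<delta>) idx x1"
  define R where "R = exp (real n * (\<Sum>j=1..kstop \<delta>. c j)) * (s x1 + real n * \<delta>^2 * (\<Sum>j=1..kstop \<delta>. d j))"
  have rho2: "rho = sqrt (R - K)" unfolding rho_def R_def c_def d_def s_def K_def by simp
  have c_nn: "c j \<ge> 0" if "j \<ge> 1" for j
  proof -
    have "0 < eta j" "0 < lam \<delta> j" using that eta_pos lam_pos by auto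
    moreover have "0 \<le> max 1 (LG^2)" by simp
    moreover have "0 \<le> 3/2 + 2 * eta j * lam \<delta> j * LG^2" using calculation by simp
    ultimately show ?thesis unfolding c_def by simp
  qed
  have d_nn: "d j \<ge> 0" if "j \<ge> 1" for j
  proof -
    have "0 < eta j" "0 < 1 - LF^2 * eta j - etaF" using that eta_pos step by auto
    thus ?thesis unfolding d_def by simp
  qed
  have sumc: "0 \<le> (\<Sum>j=1..kstop \<delta>. c j)" using c_nn by (intro sum_nonneg) auto
  have sumd: "0 \<le> (\<Sum>j=1..kstop \<delta>. d j)" using d_nn by (intro sum_nonneg) auto
  have K_nn: "0 \<le> K" unfolding K_def by simp
  have sx1: "s x1 \<ge> K" unfolding s_def by simp
  define Q where "Q = s x1 + real n * \<delta>^2 * (\<Sum>j=1..kstop \<delta>. d j)"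
  have Q: "Q \<ge> s x1" unfolding Q_def using sumd by simp
  have ex1: "exp (real n * (\<Sum>j=1..kstop \<delta>. c j)) \<ge> 1" using sumc by simp
  have RQ: "R \<ge> Q" unfolding R_def Q_def[symmetric] using mult_right_mono[OF ex1, of Q] Q sx1 K_nn by simp
  have RK: "R \<ge> K" using RQ Q sx1 by linarith
  have rho_nn: "rho \<ge> 0" using rho2 RK by simp
  have xdag_in: "xdag \<in> cball xdag rho" using rho_nn by simp
  have sol: "F i xdag = ydag i" if "i \<in> {1..n}" for i
    using xdag that unfolding is_min_dist_solution_def is_solution_def by blast
  have isol: "is_solution n D F ydag xdag" using xdag unfolding is_min_dist_solution_def by blast
  have n1: "(1::nat) \<in> {1..n}" using n_pos by simp
  have LG_nn: "0 \<le> LG" using A1Gb n1 xdag_in by (meson norm_ge_zero order_trans)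
  have Cmax_nn: "0 \<le> Cmax" using Cpos by simp
  have sq_bound: "norm v \<le> sqrt (real n) * C" if "(norm v)^2 \<le> real n * C^2" "C \<ge> 0" for v :: 'b and C
  proof -
    have "norm v \<le> sqrt (real n * C^2)" using that by (intro real_le_rsqrt) simp
    also have "\<dots> = sqrt (real n) * C" using that by (simp add: real_sqrt_mult)
    finally show ?thesis .
  qed
  have gb: "norm (G i xdag - ydag i) \<le> sqrt (real n) * Cmax" if "i \<in> {1..n}" for i
    using A3 xdag_in isol stack_comp[of n "\<lambda>i. G i xdag - ydag i" Cmax i] n_pos that Cmax_nn sq_bound
    by auto
  have eb: "norm (yd i - ydag i) \<le> sqrt (real n) * \<delta>" if "i \<in> {1..n}" for i
    using noise stack_comp[of n "\<lambda>i. yd i - ydag i" \<delta> i] n_pos that delta_pos sq_bound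
    by auto
  have eb2: "(norm (yd i - ydag i))^2 \<le> real n * \<delta>^2" if "i \<in> {1..n}" for i
    using noise stack_comp[of n "\<lambda>i. yd i - ydag i" \<delta> i] n_pos that by auto
  have onestep: "s (x - eta k *\<^sub>R (adjoint (blinfun_apply (F' (idx k) x)) (F (idx k) x - yd (idx k))
       + lam \<delta> k *\<^sub>R adjoint (blinfun_apply (G' (idx k) x)) (G (idx k) x - yd (idx k))))
       \<le> (1 + real n * c k) * s x + real n * \<delta>^2 * d k"
    if k1: "k \<ge> 1" and xin: "x \<in> cball xdag rho" for k x
  proof -
    define i where "i = idx k"
    have i: "i \<in> {1..n}" using idx_range k1 unfolding i_def by auto
    define et where "et = eta k"
    define la where "la = lam \<delta> k"
    have et: "et > 0" using eta_pos k1 unfolding et_def by auto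
    have la: "la > 0" using lam_pos k1 unfolding la_def by auto
    define a where "a = F i x - yd i"
    define b where "b = G i x - yd i"
    define ep where "ep = yd i - ydag i"
    define g where "g = G i xdag - ydag i"
    define e where "e = x - xdag"
    define u where "u = adjoint (blinfun_apply (F' i x)) a"
    define v where "v = la *\<^sub>R adjoint (blinfun_apply (G' i x)) b"
    define A where "A = norm a"
    define B where "B = norm b"
    define En where "En = norm e"
    define Ep where "Ep = norm ep"
    define W where "W = norm g + norm ep"
    have new: "x - eta k *\<^sub>R (adjoint (blinfun_apply (F' (idx k) x)) (F (idx k) x - yd (idx k))
       + lam \<delta> k *\<^sub>R adjoint (blinfun_apply (G' (idx k) x)) (G (idx k) x - yd (idx k))) - xdag
       = e - et *\<^sub>R (u + v)"
      unfolding e_def et_def u_def v_def la_def a_def b_def i_def by (simp add: algebra_simps)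
    have expand: "(norm (e - et *\<^sub>R (u+v)))^2 = En^2 - 2*et*(u \<bullet> e) - 2*et*(v \<bullet> e) + et^2 * (norm (u+v))^2"
      unfolding En_def power2_norm_eq_inner
      by (simp add: inner_diff_left inner_diff_right inner_add_left inner_add_right inner_commute power2_eq_square algebra_simps)
    have hu: "u \<bullet> e = a \<bullet> F' i x e"
      using adjoint_ok[OF blinfun.bounded_linear_right, of "F' i x" e a] unfolding u_def
      by (simp add: inner_commute)
    have hv: "v \<bullet> e = la * (b \<bullet> G' i x e)"
      using adjoint_ok[OF blinfun.bounded_linear_right, of "G' i x" e b] unfolding v_def
      by (simp add: inner_commute)
    have nu: "norm u \<le> LF * A"
    proof -
      have "norm u \<le> norm (F' i x) * norm a" unfolding u_def by (rule adjoint_norm)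
      also have "\<dots> \<le> LF * norm a" using A1Fb i xin by (intro mult_right_mono) auto
      finally show ?thesis unfolding A_def .
    qed
    have nv: "norm v \<le> la * (LG * B)"
    proof -
      have "norm v = la * norm (adjoint (blinfun_apply (G' i x)) b)" unfolding v_def using la by simp
      also have "\<dots> \<le> la * (norm (G' i x) * norm b)" using la by (intro mult_left_mono adjoint_norm) auto
      also have "\<dots> \<le> la * (LG * norm b)" using A1Gb i xin la by (intro mult_left_mono mult_right_mono) auto
      finally show ?thesis unfolding B_def .
    qed
    define r where "r = F i xdag - F i x - F' i x (xdag - x)"
    have nr: "norm r \<le> etaF * norm (F i xdag - F i x)" using A2 i xin xdag_in unfolding r_def by blast
    have Fx: "F i xdag - F i x = -(a + ep)" using sol[OF i] unfolding a_def ep_def by simp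
    have lin0: "F' i x (xdag - x) = - F' i x e" unfolding e_def by (simp add: blinfun.diff_right)
    have lin: "F' i x e = a + ep + r" unfolding r_def lin0 using Fx by (simp add: algebra_simps)
    have nr2: "norm r \<le> etaF * (A + Ep)"
    proof -
      have "norm (F i xdag - F i x) \<le> A + Ep" unfolding Fx A_def Ep_def by (metis norm_minus_cancel norm_triangle_ineq)
      thus ?thesis using nr etaF by (meson mult_left_mono order_trans)
    qed
    have ip1: "a \<bullet> F' i x e \<ge> (1-etaF)*A^2 - (1+etaF)*A*Ep"
    proof -
      have eq: "a \<bullet> F' i x e = A^2 + a \<bullet> ep + a \<bullet> r"
        unfolding lin A_def by (simp add: inner_add_right power2_norm_eq_inner)
      have t1: "a \<bullet> ep \<ge> - (A * Ep)" using Cauchy_Schwarz_ineq2[of a ep] unfolding A_def Ep_def by linarith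
      have t2: "a \<bullet> r \<ge> - (A * (etaF * (A + Ep)))"
      proof -
        have "\<bar>a \<bullet> r\<bar> \<le> A * norm r" using Cauchy_Schwarz_ineq2[of a r] unfolding A_def .
        also have "\<dots> \<le> A * (etaF * (A + Ep))" using nr2 unfolding A_def by (intro mult_left_mono) auto
        finally show ?thesis by linarith
      qed
      have "(1-etaF)*A^2 - (1+etaF)*A*Ep = A^2 - A*Ep - A*(etaF*(A+Ep))" by (simp add: power2_eq_square algebra_simps)
      thus ?thesis using eq t1 t2 by linarith
    qed
    have mvt: "norm (G i x - G i xdag) \<le> LG * En"
    proof -
      have "norm (G i x - G i xdag) \<le> LG * norm (x - xdag)"
      proof (rule differentiable_bound[where S="cball xdag rho" and f'="\<lambda>x. blinfun_apply (G' i x)"])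
        show "convex (cball xdag rho)" by simp
        show "(G i has_derivative blinfun_apply (G' i y)) (at y within cball xdag rho)" if "y \<in> cball xdag rho" for y
          using A1G i that by (blast intro: has_derivative_at_withinI)
        show "onorm (blinfun_apply (G' i y)) \<le> LG" if "y \<in> cball xdag rho" for y
          using A1Gb i that by (simp add: norm_blinfun.rep_eq[symmetric])
      qed (use xin xdag_in in auto)
      thus ?thesis unfolding En_def e_def .
    qed
    have bb: "B \<le> LG * En + W"
    proof -
      have "b = (G i x - G i xdag) + g - ep" unfolding b_def g_def ep_def by (simp add: algebra_simps)
      moreover have "norm ((G i x - G i xdag) + g - ep) \<le> norm ((G i x - G i xdag) + g) + norm ep"
        by (rule norm_triangle_ineq4)
      moreover have "norm ((G i x - G i xdag) + g) \<le> norm (G i x - G i xdag) + norm g"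
        by (rule norm_triangle_ineq)
      ultimately have "B \<le> norm (G i x - G i xdag) + norm g + norm ep" unfolding B_def by simp
      thus ?thesis using mvt unfolding W_def by linarith
    qed
    have Wb: "W \<le> sqrt (real n) * (Cmax + \<delta>)"
      using gb[OF i] eb[OF i] unfolding W_def g_def ep_def by (simp add: algebra_simps)
    have W2: "W^2 \<le> real n * K"
    proof -
      have "W^2 \<le> (sqrt (real n) * (Cmax + \<delta>))^2" using Wb unfolding W_def by (intro power_mono) auto
      thus ?thesis unfolding K_def by (simp add: power_mult_distrib)
    qed
    have ip2: "la * (b \<bullet> G' i x e) \<ge> - (la * (B * LG * En))"
    proof -
      have "\<bar>b \<bullet> G' i x e\<bar> \<le> B * norm (G' i x e)" using Cauchy_Schwarz_ineq2 unfolding B_def by blast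
      also have "\<dots> \<le> B * (LG * En)"
      proof -
        have "norm (G' i x e) \<le> norm (G' i x) * En" unfolding En_def by (rule norm_blinfun)
        also have "\<dots> \<le> LG * En" using A1Gb i xin unfolding En_def by (intro mult_right_mono) auto
        finally show ?thesis unfolding B_def by (intro mult_left_mono) auto
      qed
      finally have "b \<bullet> G' i x e \<ge> - (B * LG * En)" by (simp add: mult.assoc)
      from mult_left_mono[OF this, of la] la show ?thesis by simp
    qed
    have nuv: "(norm (u+v))^2 \<le> 2*(LF^2*A^2) + 2*(la^2*LG^2*B^2)"
    proof -
      have "norm (u+v) \<le> norm u + norm v" by (rule norm_triangle_ineq)
      hence "(norm (u+v))^2 \<le> (norm u + norm v)^2" by (intro power_mono) auto
      also have "\<dots> \<le> 2*(norm u)^2 + 2*(norm v)^2"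
        using sum_squares_ge_zero[of "norm u - norm v" 0] by (simp add: power2_eq_square algebra_simps)
      finally have c1: "(norm (u+v))^2 \<le> 2*(norm u)^2 + 2*(norm v)^2" .
      have "(norm u)^2 \<le> (LF*A)^2" using nu by (intro power_mono) auto
      hence c2: "2*(norm u)^2 \<le> 2*(LF^2*A^2)" by (simp add: power_mult_distrib)
      have "(norm v)^2 \<le> (la*(LG*B))^2" using nv by (intro power_mono) auto
      hence c3: "2*(norm v)^2 \<le> 2*(la^2*LG^2*B^2)" by (simp add: power_mult_distrib)
      show ?thesis using c1 c2 c3 by linarith
    qed
    define \<gamma> where "\<gamma> = 1 - LF^2 * eta k - etaF"
    have \<gamma>: "\<gamma> > 0" using step k1 unfolding \<gamma>_def by auto
    have et2: "0 \<le> 2*et" using et by simp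
    have T1: "-2*et*(u \<bullet> e) \<le> -2*et*((1-etaF)*A^2 - (1+etaF)*A*Ep)"
    proof -
      have "2*et*((1-etaF)*A^2 - (1+etaF)*A*Ep) \<le> 2*et*(a \<bullet> F' i x e)" by (rule mult_left_mono[OF ip1 et2])
      thus ?thesis unfolding hu by linarith
    qed
    have T2: "-2*et*(v \<bullet> e) \<le> 2*et*la*(B*LG*En)"
    proof -
      have "2*et*(-(la*(B*LG*En))) \<le> 2*et*(la*(b \<bullet> G' i x e))" by (rule mult_left_mono[OF ip2 et2])
      moreover have "2*et*(-(la*(B*LG*En))) = -(2*et*la*(B*LG*En))" by simp
      ultimately show ?thesis unfolding hv by linarith
    qed
    have T3: "et^2 * (norm (u+v))^2 \<le> et^2*(2*LF^2*A^2) + et^2*(2*la^2*LG^2*B^2)"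
    proof -
      have "et^2 * (norm (u+v))^2 \<le> et^2 * (2*(LF^2*A^2) + 2*(la^2*LG^2*B^2))"
        using nuv by (intro mult_left_mono) auto
      thus ?thesis by (simp add: algebra_simps)
    qed
    have Fp: "-2*et*((1-etaF)*A^2 - (1+etaF)*A*Ep) + et^2*(2*LF^2*A^2) \<le> d k * Ep^2"
      using fpart[OF et \<gamma>, of LF etaF A Ep] unfolding d_def \<gamma>_def et_def by simp
    have Fp2: "d k * Ep^2 \<le> d k * (real n * \<delta>^2)"
      using eb2[OF i] d_nn[OF k1] unfolding Ep_def ep_def by (intro mult_left_mono) auto
    have Gp: "2*et*la*(B*LG*En) + et^2*(2*la^2*LG^2*B^2) \<le> c k * (En^2 + W^2)"
      using gpart[of et la LG B En W] et la LG_nn bb unfolding c_def et_def la_def B_def En_def W_def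
      by (simp add: mult.assoc)
    have EW: "En^2 + W^2 \<le> real n * (En^2 + K)"
    proof -
      have "En^2 \<le> real n * En^2" using n_pos by (simp add: mult_le_cancel_right1)
      thus ?thesis using W2 by (simp add: algebra_simps)
    qed
    have Gp2: "c k * (En^2 + W^2) \<le> c k * (real n * (En^2 + K))"
      using EW c_nn[OF k1] by (intro mult_left_mono) auto
    have sx: "s x = En^2 + K" unfolding s_def En_def e_def ..
    have fin1: "(1 + real n * c k) * s x = En^2 + K + c k * (real n * (En^2 + K))"
      unfolding sx by (simp add: algebra_simps)
    have fin2: "real n * \<delta>^2 * d k = d k * (real n * \<delta>^2)" by simp
    have "s (x - eta k *\<^sub>R (adjoint (blinfun_apply (F' (idx k) x)) (F (idx k) x - yd (idx k))
       + lam \<delta> k *\<^sub>R adjoint (blinfun_apply (G' (idx k) x)) (G (idx k) x - yd (idx k))))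
       = (norm (e - et *\<^sub>R (u+v)))^2 + K" unfolding s_def new ..
    moreover have "s x = En^2 + K" unfolding s_def En_def e_def ..
    ultimately show ?thesis using expand T1 T2 T3 Fp Fp2 Gp Gp2 fin1 fin2 by linarith
  qed
  define P where "P k = exp (real n * (\<Sum>j\<in>{1..<k}. c j)) * (s x1 + real n * \<delta>^2 * (\<Sum>j\<in>{1..<k}. d j))" for k
  have P_le: "P k \<le> R" if "k \<le> Suc (kstop \<delta>)" for k
  proof -
    have sub: "{1..<k} \<subseteq> {1..kstop \<delta>}" using that by auto
    have "(\<Sum>j\<in>{1..<k}. c j) \<le> (\<Sum>j=1..kstop \<delta>. c j)"
      using c_nn by (intro sum_mono2[OF _ sub]) auto
    hence e1: "exp (real n * (\<Sum>j\<in>{1..<k}. c j)) \<le> exp (real n * (\<Sum>j=1..kstop \<delta>. c j))"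
      by (simp add: mult_left_mono)
    have "(\<Sum>j\<in>{1..<k}. d j) \<le> (\<Sum>j=1..kstop \<delta>. d j)"
      using d_nn by (intro sum_mono2[OF _ sub]) auto
    hence "real n * \<delta>^2 * (\<Sum>j\<in>{1..<k}. d j) \<le> real n * \<delta>^2 * (\<Sum>j=1..kstop \<delta>. d j)"
      by (simp add: mult_left_mono)
    hence q: "s x1 + real n * \<delta>^2 * (\<Sum>j\<in>{1..<k}. d j) \<le> Q" unfolding Q_def by simp
    have q0: "0 \<le> s x1 + real n * \<delta>^2 * (\<Sum>j\<in>{1..<k}. d j)"
    proof -
      have "0 \<le> (\<Sum>j\<in>{1..<k}. d j)" using d_nn by (intro sum_nonneg) auto
      thus ?thesis using sx1 K_nn by simp
    qed
    show ?thesis unfolding P_def R_def Q_def[symmetric]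
      using mult_mono[OF e1 q _ q0] by simp
  qed
  have memb: "x \<in> cball xdag rho" if "s x \<le> R" for x
  proof -
    have "(norm (x - xdag))^2 \<le> R - K" using that unfolding s_def by simp
    hence "norm (x - xdag) \<le> sqrt (R - K)" by (rule real_le_rsqrt)
    thus ?thesis unfolding rho2 by (simp add: dist_norm norm_minus_commute)
  qed
  have main: "1 \<le> k \<longrightarrow> k \<le> kstop \<delta> \<longrightarrow> X k \<in> cball xdag rho \<and> s (X k) \<le> P k" for k
  proof (induction k)
    case 0
    then show ?case by simp
  next
    case (Suc k)
    show ?case
    proof (intro impI)
      assume h: "1 \<le> Suc k" "Suc k \<le> kstop \<delta>"
      show "X (Suc k) \<in> cball xdag rho \<and> s (X (Suc k)) \<le> P (Suc k)"
      proof (cases "k = 0")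
        case True
        have X1: "X (Suc k) = x1" unfolding X_def True by simp
        have "P (Suc k) = s x1" unfolding P_def True by simp
        hence bnd: "s (X (Suc k)) \<le> P (Suc k)" using X1 by simp
        have "P (Suc k) \<le> R" using h by (intro P_le) simp
        then show ?thesis using bnd memb by (meson order_trans)
      next
        case False
        hence k1: "k \<ge> 1" by simp
        from Suc.IH k1 h have xin: "X k \<in> cball xdag rho" and bk: "s (X k) \<le> P k" by auto
        have XS: "X (Suc k) = X k - eta k *\<^sub>R (adjoint (blinfun_apply (F' (idx k) (X k))) (F (idx k) (X k) - yd (idx k))
          + lam \<delta> k *\<^sub>R adjoint (blinfun_apply (G' (idx k) (X k))) (G (idx k) (X k) - yd (idx k)))"
          unfolding X_def using False by (simp add: Let_def)
        have os: "s (X (Suc k)) \<le> (1 + real n * c k) * s (X k) + real n * \<delta>^2 * d k"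
          unfolding XS by (rule onestep[OF k1 xin])
        define Sc where "Sc = (\<Sum>j\<in>{1..<k}. c j)"
        define Sd where "Sd = (\<Sum>j\<in>{1..<k}. d j)"
        define Q0 where "Q0 = s x1 + real n * \<delta>^2 * Sd"
        have Sc0: "Sc \<ge> 0" unfolding Sc_def using c_nn by (intro sum_nonneg) auto
        have Sd0: "Sd \<ge> 0" unfolding Sd_def using d_nn by (intro sum_nonneg) auto
        have Q00: "Q0 \<ge> 0" unfolding Q0_def using Sd0 sx1 K_nn by simp
        have ck: "c k \<ge> 0" "d k \<ge> 0" using c_nn d_nn k1 by auto
        have Pk: "P k = exp (real n * Sc) * Q0" unfolding P_def Sc_def Sd_def Q0_def ..
        have PSk: "P (Suc k) = exp (real n * (Sc + c k)) * (s x1 + real n * \<delta>^2 * (Sd + d k))"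
          unfolding P_def Sc_def Sd_def using k1 by (simp add: sum.atLeastLessThan_Suc)
        have a1: "(1 + real n * c k) * s (X k) \<le> (1 + real n * c k) * (exp (real n * Sc) * Q0)"
          using bk ck Pk by (intro mult_left_mono) auto
        have a2: "(1 + real n * c k) * (exp (real n * Sc) * Q0) \<le> exp (real n * c k) * (exp (real n * Sc) * Q0)"
          using Q00 by (intro mult_right_mono) auto
        have a3: "exp (real n * c k) * (exp (real n * Sc) * Q0) = exp (real n * (Sc + c k)) * Q0"
          by (simp add: distrib_left exp_add)
        have e1: "exp (real n * (Sc + c k)) \<ge> 1" using Sc0 ck by simp
        have a4: "real n * \<delta>^2 * d k \<le> exp (real n * (Sc + c k)) * (real n * \<delta>^2 * d k)"
          using mult_right_mono[OF e1, of "real n * \<delta>^2 * d k"] ck by simp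
        have a5: "exp (real n * (Sc + c k)) * Q0 + exp (real n * (Sc + c k)) * (real n * \<delta>^2 * d k)
           = P (Suc k)" unfolding PSk Q0_def by (simp add: algebra_simps)
        have bnd: "s (X (Suc k)) \<le> P (Suc k)" using os a1 a2 a3 a4 a5 by linarith
        have "P (Suc k) \<le> R" using h by (intro P_le) simp
        then show ?thesis using bnd memb by (meson order_trans)
      qed
    qed
  qed
  show ?thesis using main unfolding X_def by blast
qed

end
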